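(* Let $\sigma_0$ be a strictly positive random variable with $L(x):=1/\mathbb{P}(\sigma_0>x)$ slowly varying at infinity (i.e. $\lim_{u\to\infty}L(uv)/L(u)=1$ for every $v>0$), and let $Y=\{Y_n\}_{n\in\mathbb{N}}$ be i.i.d. with the law of $\sigma_0$. Let $h_t$ be any function with $h_t\to\infty$, $h_t^2=o(r_t)$, and such that, for all sufficiently large $t$, \[ L(\ell_t/h_t^3)>L(\ell_t)(1-1/h_t)\quad\text{and}\quad L(\ell_th_t^3)<L(\ell_t)(1+1/h_t).\] Then, as $t\to\infty$, \[ \mathbb{P}\Big(\bar s^{h_t}_{\ell_t}<\frac{\ell_t}{h_t^3}\Big)\to1.\]
   Context: $\ell_t:=\min\{s\ge0: sL(s)\ge t\}$ and $r_t:=L(\ell_t)$. For $n\ge0$, $M_n:=\max\{Y_i: i\le\lfloor n\rfloor\}$. For a level $l>0$, $n_l:=\min\{n\in\mathbb{N}: M_n>l\}$, and for $h>0$, $\bar s^h_l:=\sum_{n\in\mathbb{N}:\,1\le|n-n_l|<L(l)/h}Y_n$. *)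

theory Defs
  imports "HOL-Probability.Probability" "HOL-Library.Landau_Symbols"
begin

definition tailL :: "'a measure \<Rightarrow> ('a \<Rightarrow> real) \<Rightarrow> real \<Rightarrow> real" where
  "tailL M X x = 1 / measure M {\<omega> \<in> space M. X \<omega> > x}"

definition ellt :: "(real \<Rightarrow> real) \<Rightarrow> real \<Rightarrow> real" where
  "ellt L t = Inf {s. 0 \<le> s \<and> t \<le> s * L s}"

definition rt :: "(real \<Rightarrow> real) \<Rightarrow> real \<Rightarrow> real" where
  "rt L t = L (ellt L t)"

definition runmax :: "(nat \<Rightarrow> 'a \<Rightarrow> real) \<Rightarrow> real \<Rightarrow> 'a \<Rightarrow> real" where
  "runmax Y n \<omega> = Max {Y i \<omega> | i. i \<le> nat \<lfloor>n\<rfloor>}"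

definition first_exceed :: "(nat \<Rightarrow> 'a \<Rightarrow> real) \<Rightarrow> real \<Rightarrow> 'a \<Rightarrow> nat" where
  "first_exceed Y l \<omega> = (LEAST n::nat. runmax Y (real n) \<omega> > l)"

definition sbar :: "(real \<Rightarrow> real) \<Rightarrow> (nat \<Rightarrow> 'a \<Rightarrow> real) \<Rightarrow> real \<Rightarrow> real \<Rightarrow> 'a \<Rightarrow> real" where
  "sbar L Y h l \<omega> =
     (\<Sum>n \<in> {n::nat. 1 \<le> \<bar>int n - int (first_exceed Y l \<omega>)\<bar> \<and>
                    real_of_int \<bar>int n - int (first_exceed Y l \<omega>)\<bar> < L l / h}. Y n \<omega>)"

end

theory Submission
  imports Defs
begin


lemma inv_le_aux: "0 < b \<Longrightarrow> b \<le> a \<Longrightarrow> 1/a \<le> 1/(b::real)"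
  by (simp add: frac_le)

lemma potter_bounded:
  fixes T :: "real \<Rightarrow> real"
  assumes y0: "y0 > 0" and Tpos: "\<And>y. T y > 0"
    and anti: "\<And>a b. a \<le> b \<Longrightarrow> T b \<le> T a"
    and dbl: "\<And>z. z \<ge> y0 \<Longrightarrow> T z \<le> 5/4 * T (2*z)"
  shows "y0 \<le> y \<Longrightarrow> y \<le> 2^m * y0 \<Longrightarrow> 1 / (T y ^ 2 * y) \<le> 1 / (T (2*y0) ^ 2 * y0)"
proof (induction m arbitrary: y)
  case 0
  then have "y = y0" by simp
  have "T (2*y0) \<le> T y0" using anti y0 by simp
  hence "T (2*y0)^2 \<le> T y0 ^2" using Tpos by (simp add: power_mono less_imp_le)
  hence "T (2*y0)^2 * y0 \<le> T y ^2 * y" using y0 \<open>y = y0\<close> by (simp add: mult_right_mono)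
  thus ?case by (rule inv_le_aux[OF mult_pos_pos[OF zero_less_power[OF Tpos] y0]])
next
  case (Suc m)
  show ?case
  proof (cases "y \<le> 2*y0")
    case True
    have "T (2*y0) \<le> T y" using anti True by simp
    hence "T (2*y0)^2 \<le> T y ^2" using Tpos by (simp add: power_mono less_imp_le)
    hence "T (2*y0)^2 * y0 \<le> T y ^2 * y" using Suc.prems y0 Tpos
      by (meson mult_mono less_imp_le zero_le_power2)
    thus ?thesis by (rule inv_le_aux[OF mult_pos_pos[OF zero_less_power[OF Tpos] y0]])
  next
    case False
    have z: "y/2 \<ge> y0" "y/2 \<le> 2^m*y0" using False Suc.prems by auto
    have IH: "1 / (T (y/2) ^ 2 * (y/2)) \<le> 1 / (T (2*y0) ^ 2 * y0)" by (rule Suc.IH[OF z])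
    have d: "T (y/2) \<le> 5/4 * T y" using dbl[of "y/2"] z by simp
    have "T (y/2)^2 \<le> (5/4 * T y)^2" using d Tpos by (simp add: power_mono less_imp_le)
    also have "(5/4 * T y)^2 = 25/16 * T y^2" by (simp add: power_mult_distrib power2_eq_square)
    finally have "T (y/2)^2 * (y/2) \<le> 25/16 * T y^2 * (y/2)" using z y0 by (intro mult_right_mono) auto
    hence "T (y/2)^2 * (y/2) \<le> (25/32) * (T y^2 * y)" by simp
    also have "\<dots> \<le> T y^2 * y" using z y0 by simp
    finally have "T (y/2)^2 * (y/2) \<le> T y^2 * y" .
    moreover have "0 < T (y/2)^2 * (y/2)" using z y0 Tpos[of "y/2"] by simp
    ultimately have "1 / (T y ^ 2 * y) \<le> 1 / (T (y/2) ^ 2 * (y/2))" by (rule inv_le_aux[rotated])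
    with IH show ?thesis by linarith
  qed
qed

lemma potter_decay:
  fixes T :: "real \<Rightarrow> real"
  assumes y0: "y0 > 0" and Tpos: "\<And>y. T y > 0"
    and anti: "\<And>a b. a \<le> b \<Longrightarrow> T b \<le> T a"
    and dbl: "\<And>z. z \<ge> y0 \<Longrightarrow> T z \<le> 5/4 * T (2*z)"
  shows "y \<ge> 2^m * y0 \<Longrightarrow> 1 / (T y ^ 2 * y) \<le> (25/32)^m * (1 / (T (2*y0) ^ 2 * y0))"
proof (induction m arbitrary: y)
  case 0
  then have "y0 \<le> y" by simp
  obtain n where "y / y0 < 2^n" using real_arch_pow[of 2 "y/y0"] by auto
  hence "y \<le> 2^n * y0" using y0 by (simp add: field_simps)
  then show ?case using potter_bounded[of y0 T, OF y0 Tpos anti dbl \<open>y0 \<le> y\<close>] by simp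
next
  case (Suc m)
  have z1: "y/2 \<ge> 2^m*y0" using Suc.prems by simp
  have "(1::real) \<le> 2^m" by simp
  hence "1 * y0 \<le> 2^m*y0" using y0 by (intro mult_right_mono) auto
  hence z: "y/2 \<ge> 2^m*y0" "y/2 \<ge> y0" using z1 by auto
  have IH: "1 / (T (y/2) ^ 2 * (y/2)) \<le> (25/32)^m * (1 / (T (2*y0) ^ 2 * y0))" by (rule Suc.IH[OF z(1)])
  have d: "T (y/2) \<le> 5/4 * T y" using dbl[of "y/2"] z by simp
  have "T (y/2)^2 \<le> (5/4 * T y)^2" using d Tpos by (simp add: power_mono less_imp_le)
  also have "(5/4 * T y)^2 = 25/16 * T y^2" by (simp add: power_mult_distrib power2_eq_square)
  finally have "T (y/2)^2 * (y/2) \<le> 25/16 * T y^2 * (y/2)" using z y0 by (intro mult_right_mono) auto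
  hence le: "T (y/2)^2 * (y/2) \<le> (25/32) * (T y^2 * y)" by simp
  have pos: "0 < T (y/2)^2 * (y/2)" using z y0 Tpos[of "y/2"] by simp
  have "1 / (T y ^ 2 * y) = (25/32) * (1 / ((25/32) * (T y^2 * y)))" by simp
  also have "\<dots> \<le> (25/32) * (1 / (T (y/2) ^ 2 * (y/2)))"
    using inv_le_aux[OF pos le] by simp
  also have "\<dots> \<le> (25/32) * ((25/32)^m * (1 / (T (2*y0) ^ 2 * y0)))" using IH by simp
  finally show ?case by simp
qed

lemma potter_tendsto:
  fixes T :: "real \<Rightarrow> real"
  assumes y0: "y0 > 0" and Tpos: "\<And>y. T y > 0"
    and anti: "\<And>a b. a \<le> b \<Longrightarrow> T b \<le> T a"
    and dbl: "\<And>z. z \<ge> y0 \<Longrightarrow> T z \<le> 5/4 * T (2*z)"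
  shows "((\<lambda>y. 1 / (T y ^ 2 * y)) \<longlongrightarrow> 0) at_top"
proof -
  define B where "B = 1 / (T (2*y0) ^ 2 * y0)"
  have "T (2*y0) > 0" by (rule Tpos)
  hence B: "B > 0" using y0 by (simp add: B_def)
  have "((\<lambda>m. (25/32::real)^m * B) \<longlongrightarrow> 0 * B) sequentially"
    by (intro tendsto_mult LIMSEQ_power_zero) auto
  hence lim: "((\<lambda>m. (25/32::real)^m * B) \<longlongrightarrow> 0) sequentially" by simp
  show ?thesis
  proof (rule tendstoI)
    fix e :: real assume e: "e > 0"
    from lim e have "eventually (\<lambda>m. dist ((25/32::real)^m * B) 0 < e) sequentially"
      by (rule tendstoD)
    then obtain m where "\<forall>n\<ge>m. dist ((25/32::real)^n * B) 0 < e"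
      by (auto simp: eventually_sequentially)
    hence "dist ((25/32::real)^m * B) 0 < e" by simp
    hence m: "(25/32::real)^m * B < e" by (simp add: dist_real_def)
    have "eventually (\<lambda>y. y \<ge> 2^m * y0) at_top" by (rule eventually_ge_at_top)
    thus "eventually (\<lambda>y. dist (1 / (T y ^ 2 * y)) 0 < e) at_top"
    proof eventually_elim
      case (elim y)
      have "0 < (2::real)^m * y0" using y0 by simp
      hence "y > 0" using elim by linarith
      have "1 / (T y ^ 2 * y) \<le> (25/32)^m * B"
        using potter_decay[of y0 T, OF y0 Tpos anti dbl elim] by (simp add: B_def)
      moreover have "1 / (T y ^ 2 * y) > 0" using \<open>y > 0\<close> Tpos[of y] by simp
      ultimately show ?case using m by simp
    qed
  qed
qed

lemma ebound:
  fixes T e :: "real \<Rightarrow> real"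
  assumes y0: "y0 > 0" and Tpos: "\<And>y. T y > 0"
    and dbl: "\<And>z. z \<ge> y0 \<Longrightarrow> T z \<le> 5/4 * T (2*z)"
    and e1: "\<And>x. x > 0 \<Longrightarrow> e x \<le> 1"
    and erec: "\<And>x. x > 0 \<Longrightarrow> e x \<le> T (x/2) + e (x/2) / 2"
  shows "y0 \<le> x \<Longrightarrow> x \<le> 2^m * y0 \<Longrightarrow> e x \<le> 4 * T x + 2 * y0 / x"
proof (induction m arbitrary: x)
  case 0
  then have "x = y0" by simp
  then show ?case using e1[of x] y0 Tpos[of x] by simp
next
  case (Suc m)
  show ?case
  proof (cases "x \<le> 2*y0")
    case True
    have "1 \<le> 2 * y0 / x" using True Suc.prems y0 by (simp add: field_simps)
    moreover have "0 < x" using Suc.prems y0 by simp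
    moreover have "0 < T x" by (rule Tpos)
    ultimately show ?thesis using e1[of x] \<open>1 \<le> 2 * y0 / x\<close> by linarith
  next
    case False
    have z: "x/2 \<ge> y0" "x/2 \<le> 2^m*y0" using False Suc.prems by auto
    have IH: "e (x/2) \<le> 4 * T (x/2) + 2 * y0 / (x/2)" by (rule Suc.IH[OF z])
    have d: "T (x/2) \<le> 5/4 * T x" using dbl[of "x/2"] z by simp
    have "e x \<le> T (x/2) + e (x/2) / 2" using erec[of x] z y0 by simp
    also have "\<dots> \<le> T (x/2) + (4 * T (x/2) + 2 * y0 / (x/2)) / 2" using IH by simp
    also have "\<dots> = 3 * T (x/2) + 2 * y0 / x" by simp
    also have "\<dots> \<le> 4 * T x + 2 * y0 / x" using d Tpos[of x] by simp
    finally show ?thesis .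
  qed
qed



definition phi :: "real \<Rightarrow> real \<Rightarrow> real" where
  "phi x y = max 0 (min 1 (y / x))"

lemma phi_meas[measurable]: "phi x \<in> borel_measurable borel"
  unfolding phi_def by measurable

lemma phi_bounds: "0 \<le> phi x y" "phi x y \<le> 1"
  unfolding phi_def by auto

lemma phi_sum:
  fixes a :: "nat \<Rightarrow> real"
  assumes "finite W" "x > 0" "x \<le> (\<Sum>n\<in>W. a n)"
  shows "1 \<le> (\<Sum>n\<in>W. phi x (a n))"
proof (cases "\<exists>n\<in>W. a n > x")
  case True
  then obtain n where n: "n \<in> W" "a n > x" by auto
  hence "phi x (a n) = 1" using assms(2) by (simp add: phi_def)
  moreover have "phi x (a n) \<le> (\<Sum>n\<in>W. phi x (a n))"
    using n(1) assms(1) by (intro member_le_sum) (auto simp: phi_bounds)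
  ultimately show ?thesis by simp
next
  case False
  have "\<And>n. n \<in> W \<Longrightarrow> a n / x \<le> phi x (a n)"
    using False assms(2) by (auto simp: phi_def)
  hence "(\<Sum>n\<in>W. a n / x) \<le> (\<Sum>n\<in>W. phi x (a n))" by (rule sum_mono)
  moreover have "(\<Sum>n\<in>W. a n / x) = (\<Sum>n\<in>W. a n) / x" by (simp add: sum_divide_distrib)
  moreover have "1 \<le> (\<Sum>n\<in>W. a n) / x" using assms by simp
  ultimately show ?thesis by linarith
qed

lemma maxmin_aux: "2 * (u::real) \<le> 1 \<Longrightarrow> max 0 (min 1 u) \<le> max 0 (min 1 (2 * u)) / 2"
  by (auto simp: max_def min_def)

lemma phi_rec: assumes x: "x > 0" shows "phi x y \<le> indicator {x/2<..} y + phi (x/2) y / 2"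
proof (cases "y > x/2")
  case True
  thus ?thesis using phi_bounds[of x y] phi_bounds[of "x/2" y] by simp
next
  case False
  hence h1: "y / (x/2) \<le> 1" using x by (simp add: field_simps)
  have h2: "y / (x/2) = 2 * (y/x)" by simp
  have "2 * (y/x) \<le> 1" using h1 unfolding h2 .
  hence "max 0 (min 1 (y/x)) \<le> max 0 (min 1 (2 * (y/x))) / 2"
    by (rule maxmin_aux)
  moreover have "phi x y = max 0 (min 1 (y/x))" by (simp add: phi_def)
  moreover have "phi (x/2) y = max 0 (min 1 (2 * (y/x)))" unfolding phi_def h2 ..
  moreover have "indicator {x/2<..} y = (0::real)" using False by simp
  ultimately show ?thesis by linarith
qed

locale iid = prob_space M for M :: "'a measure" +
  fixes s0 :: "'a \<Rightarrow> real" and Y :: "nat \<Rightarrow> 'a \<Rightarrow> real"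
  assumes s_meas[measurable]: "s0 \<in> borel_measurable M"
    and Y_meas[measurable]: "\<And>n. Y n \<in> borel_measurable M"
    and Y_indep: "indep_vars (\<lambda>_. borel) Y UNIV"
    and Y_distr: "\<And>n. distr M borel (Y n) = distr M borel s0"
begin

lemma Y_int: "g \<in> borel_measurable borel \<Longrightarrow> integral\<^sup>L M (\<lambda>\<omega>. g (Y n \<omega>)) = integral\<^sup>L M (\<lambda>\<omega>. (g (s0 \<omega>)::real))"
  using integral_distr[of "Y n" M borel g] integral_distr[of s0 M borel g] Y_distr[of n] by simp

lemma prod_indep:
  assumes I: "finite I" and g: "\<And>i. i \<in> I \<Longrightarrow> g i \<in> borel_measurable borel"
    and b: "\<And>i y. i \<in> I \<Longrightarrow> \<bar>g i y\<bar> \<le> (1::real)"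
  shows "integral\<^sup>L M (\<lambda>\<omega>. \<Prod>i\<in>I. g i (Y i \<omega>)) = (\<Prod>i\<in>I. integral\<^sup>L M (\<lambda>\<omega>. g i (s0 \<omega>)))"
    and "integrable M (\<lambda>\<omega>. \<Prod>i\<in>I. g i (Y i \<omega>))"
proof -
  have ind: "indep_vars (\<lambda>_. borel) (\<lambda>i \<omega>. g i (Y i \<omega>)) I"
    by (rule indep_vars_compose2[OF indep_vars_subset[OF Y_indep]]) (auto simp: g)
  have intg: "integrable M (\<lambda>\<omega>. g i (Y i \<omega>))" if "i \<in> I" for i
    using that g[OF that] b[OF that] by (intro integrable_const_bound[where B=1]) auto
  show "integral\<^sup>L M (\<lambda>\<omega>. \<Prod>i\<in>I. g i (Y i \<omega>)) = (\<Prod>i\<in>I. integral\<^sup>L M (\<lambda>\<omega>. g i (s0 \<omega>)))"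
    using indep_vars_lebesgue_integral[OF I ind intg] Y_int g by simp
  show "integrable M (\<lambda>\<omega>. \<Prod>i\<in>I. g i (Y i \<omega>))"
    using indep_vars_integrable[OF I ind intg] by simp
qed

lemma int_ind: "A \<in> sets borel \<Longrightarrow> integral\<^sup>L M (\<lambda>\<omega>. indicator A (s0 \<omega>)) = prob {\<omega>\<in>space M. s0 \<omega> \<in> A}"
proof -
  assume A: "A \<in> sets borel"
  have "integral\<^sup>L M (\<lambda>\<omega>. indicator A (s0 \<omega>)) = integral\<^sup>L M (indicator {\<omega>\<in>space M. s0 \<omega> \<in> A})"
    by (rule Bochner_Integration.integral_cong) (auto simp: indicator_def)
  also have "\<dots> = prob {\<omega>\<in>space M. s0 \<omega> \<in> A}" by (simp add: Int_absorb2 Collect_restrict)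
  finally show ?thesis .
qed

end


definition Wset :: "real \<Rightarrow> nat \<Rightarrow> nat set" where
  "Wset R k = {n::nat. 1 \<le> \<bar>int n - int k\<bar> \<and> real_of_int \<bar>int n - int k\<bar> < R}"

lemma sbar_eq: "sbar L Y hh l \<omega> = (\<Sum>n\<in>Wset (L l / hh) (first_exceed Y l \<omega>). Y n \<omega>)"
  by (simp add: sbar_def Wset_def)

lemma Wset_sub:
  "Wset R k \<subseteq> (\<lambda>d. k - d) ` {1..nat (\<lceil>R\<rceil> - 1)} \<union> (\<lambda>d. k + d) ` {1..nat (\<lceil>R\<rceil> - 1)}"
proof
  fix n assume "n \<in> Wset R k"
  hence n: "1 \<le> \<bar>int n - int k\<bar>" "real_of_int \<bar>int n - int k\<bar> < R" by (auto simp: Wset_def)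
  have "real_of_int \<bar>int n - int k\<bar> < real_of_int \<lceil>R\<rceil>" using n(2) le_of_int_ceiling[of R] by linarith
  hence "\<bar>int n - int k\<bar> < \<lceil>R\<rceil>" by (simp only: of_int_less_iff)
  hence b: "\<bar>int n - int k\<bar> \<le> \<lceil>R\<rceil> - 1" by simp
  show "n \<in> (\<lambda>d. k - d) ` {1..nat (\<lceil>R\<rceil> - 1)} \<union> (\<lambda>d. k + d) ` {1..nat (\<lceil>R\<rceil> - 1)}"
  proof (cases "n < k")
    case True
    have "k - n \<ge> 1" using True by simp
    moreover have "int (k - n) = \<bar>int n - int k\<bar>" using True by simp
    hence "k - n \<le> nat (\<lceil>R\<rceil> - 1)" using b by linarith
    ultimately have "k - n \<in> {1..nat (\<lceil>R\<rceil> - 1)}" by simp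
    moreover have "n = k - (k - n)" using True by simp
    ultimately show ?thesis by blast
  next
    case False
    have "int (n - k) = \<bar>int n - int k\<bar>" using False by simp
    hence "n - k \<le> nat (\<lceil>R\<rceil> - 1)" "1 \<le> n - k" using b n(1) by linarith+
    hence "n - k \<in> {1..nat (\<lceil>R\<rceil> - 1)}" by simp
    moreover have "n = k + (n - k)" using False by simp
    ultimately show ?thesis by blast
  qed
qed

lemma Wset_finite: "finite (Wset R k)"
  by (rule finite_subset[OF Wset_sub]) auto

lemma Wset_card: assumes "R \<ge> 0" shows "real (card (Wset R k)) \<le> 2 * R"
proof -
  let ?m = "nat (\<lceil>R\<rceil> - 1)"
  have "card (Wset R k) \<le> card ((\<lambda>d. k - d) ` {1..?m} \<union> (\<lambda>d. k + d) ` {1..?m})"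
    by (rule card_mono[OF _ Wset_sub]) auto
  also have "\<dots> \<le> card ((\<lambda>d. k - d) ` {1..?m}) + card ((\<lambda>d. k + d) ` {1..?m})" by (rule card_Un_le)
  also have "\<dots> \<le> ?m + ?m" using card_image_le[of "{1..?m}"] by (intro add_mono) auto
  finally have "real (card (Wset R k)) \<le> real ?m + real ?m" by linarith
  moreover have "real ?m \<le> R" using assms by linarith
  ultimately show ?thesis by linarith
qed

lemma Wset_nk: "n \<in> Wset R k \<Longrightarrow> n \<noteq> k"
  by (auto simp: Wset_def)

lemma runmax_gt: "l < runmax Y (real n) \<omega> \<longleftrightarrow> (\<exists>i\<le>n. l < Y i \<omega>)"
proof -
  have "{Y i \<omega> |i. i \<le> nat \<lfloor>real n\<rfloor>} = (\<lambda>i. Y i \<omega>) ` {..n}" by auto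
  thus ?thesis unfolding runmax_def by (auto simp: Max_gr_iff)
qed

lemma fe_alt: "first_exceed Y l \<omega> = (LEAST n. \<exists>i\<le>n. l < Y i \<omega>)"
  unfolding first_exceed_def runmax_gt ..

lemma fe_least: assumes "l < Y k \<omega>" "\<forall>i<k. Y i \<omega> \<le> l" shows "first_exceed Y l \<omega> = k"
  unfolding fe_alt
proof (rule Least_equality)
  show "\<exists>i\<le>k. l < Y i \<omega>" using assms by auto
  fix n assume "\<exists>i\<le>n. l < Y i \<omega>"
  then obtain i where "i \<le> n" "l < Y i \<omega>" by auto
  hence "k \<le> i" using assms(2) by (meson not_le)
  thus "k \<le> n" using \<open>i \<le> n\<close> by simp
qed

context iid begin

lemma fe_meas: "(\<lambda>\<omega>. first_exceed Y l \<omega>) \<in> measurable M (count_space UNIV)"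
  unfolding fe_alt by measurable

lemma sbar_meas: "(\<lambda>\<omega>. sbar L Y hh l \<omega>) \<in> borel_measurable M"
  unfolding sbar_eq
  by (rule measurable_compose_countable[OF _ fe_meas]) measurable

lemma C_bound:
  assumes x: "x > 0" and R: "R \<ge> 0"
  shows "prob {\<omega>\<in>space M. (\<forall>i<k. Y i \<omega> \<le> l) \<and> l < Y k \<omega> \<and> x \<le> (\<Sum>n\<in>Wset R k. Y n \<omega>)} * prob {\<omega>\<in>space M. s0 \<omega> \<le> l}
     \<le> 2 * R * expectation (\<lambda>\<omega>. phi x (s0 \<omega>)) * prob {\<omega>\<in>space M. l < s0 \<omega>} * prob {\<omega>\<in>space M. s0 \<omega> \<le> l} ^ k"
proof -
  define q where "q = prob {\<omega>\<in>space M. s0 \<omega> \<le> l}"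
  define p where "p = prob {\<omega>\<in>space M. l < s0 \<omega>}"
  define E where "E = expectation (\<lambda>\<omega>. phi x (s0 \<omega>))"
  define W where "W = Wset R k"
  define A where "A = {\<omega>\<in>space M. (\<forall>i<k. Y i \<omega> \<le> l) \<and> l < Y k \<omega> \<and> x \<le> (\<Sum>n\<in>W. Y n \<omega>)}"
  define J where "J n = {..<k} - {n}" for n
  define g where "g n i y = (if i = n then phi x y else if i = k then indicator {l<..} y else (indicator {..l} y :: real))" for n i y
  define G where "G n \<omega> = (\<Prod>i\<in>insert k (insert n (J n)). g n i (Y i \<omega>))" for n \<omega>
  have A_sets: "A \<in> sets M" unfolding A_def W_def by measurable
  have fin: "finite W" by (simp add: W_def Wset_finite)
  have gm: "g n i \<in> borel_measurable borel" for n i unfolding g_def by (cases "i = n"; cases "i = k") auto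
  have gb: "\<bar>g n i y\<bar> \<le> 1" for n i y unfolding g_def using phi_bounds[of x y] by (auto simp: indicator_def)
  have gnn: "0 \<le> g n i y" for n i y unfolding g_def using phi_bounds[of x y] by (auto simp: indicator_def)
  have Jfin: "finite (J n)" and Jn: "n \<notin> J n" and Jk: "k \<notin> J n" for n by (auto simp: J_def)
  have finI: "finite (insert k (insert n (J n)))" for n by (simp add: J_def)
  have Gint: "integrable M (G n)" for n
    unfolding G_def by (rule prod_indep(2)[OF finI]) (auto simp: gm gb)
  have q01: "0 \<le> q" "q \<le> 1" by (auto simp: q_def)
  have p0: "0 \<le> p" by (simp add: p_def)
  have E0: "0 \<le> E" unfolding E_def by (rule Bochner_Integration.integral_nonneg) (simp add: phi_bounds)
  have GE: "integral\<^sup>L M (G n) = p * (E * q ^ card (J n))" if "n \<in> W" for n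
  proof -
    have nk: "n \<noteq> k" using that Wset_nk W_def by auto
    have "integral\<^sup>L M (G n) = (\<Prod>i\<in>insert k (insert n (J n)). integral\<^sup>L M (\<lambda>\<omega>. g n i (s0 \<omega>)))"
      unfolding G_def by (rule prod_indep(1)[OF finI]) (auto simp: gm gb)
    also have "\<dots> = integral\<^sup>L M (\<lambda>\<omega>. g n k (s0 \<omega>)) * (integral\<^sup>L M (\<lambda>\<omega>. g n n (s0 \<omega>)) * (\<Prod>i\<in>J n. integral\<^sup>L M (\<lambda>\<omega>. g n i (s0 \<omega>))))"
      using nk by (simp add: Jfin Jn Jk)
    also have "(\<Prod>i\<in>J n. integral\<^sup>L M (\<lambda>\<omega>. g n i (s0 \<omega>))) = (\<Prod>i\<in>J n. q)"
    proof (rule prod.cong)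
      fix i assume "i \<in> J n"
      hence "i \<noteq> n" "i \<noteq> k" by (auto simp: J_def)
      hence "integral\<^sup>L M (\<lambda>\<omega>. g n i (s0 \<omega>)) = integral\<^sup>L M (\<lambda>\<omega>. indicator {..l} (s0 \<omega>))"
        by (simp add: g_def)
      also have "\<dots> = q" by (simp add: int_ind q_def)
      finally show "integral\<^sup>L M (\<lambda>\<omega>. g n i (s0 \<omega>)) = q" .
    qed simp
    also have "integral\<^sup>L M (\<lambda>\<omega>. g n k (s0 \<omega>)) = p"
      using nk by (simp add: g_def int_ind p_def)
    also have "integral\<^sup>L M (\<lambda>\<omega>. g n n (s0 \<omega>)) = E"
      by (simp add: g_def E_def)
    finally show ?thesis by simp
  qed
  have pw: "indicator A \<omega> \<le> (\<Sum>n\<in>W. G n \<omega>)" if "\<omega> \<in> space M" for \<omega>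
  proof (cases "\<omega> \<in> A")
    case True
    hence a: "\<forall>i<k. Y i \<omega> \<le> l" "l < Y k \<omega>" "x \<le> (\<Sum>n\<in>W. Y n \<omega>)" by (auto simp: A_def)
    have "G n \<omega> = phi x (Y n \<omega>)" if "n \<in> W" for n
    proof -
      have nk: "n \<noteq> k" using that Wset_nk W_def by auto
      have "G n \<omega> = g n k (Y k \<omega>) * (g n n (Y n \<omega>) * (\<Prod>i\<in>J n. g n i (Y i \<omega>)))"
        using nk by (simp add: G_def Jfin Jn Jk)
      also have "(\<Prod>i\<in>J n. g n i (Y i \<omega>)) = 1"
        by (rule prod.neutral) (use a in \<open>auto simp: J_def g_def\<close>)
      finally show ?thesis using nk a by (simp add: g_def)
    qed
    hence "(\<Sum>n\<in>W. G n \<omega>) = (\<Sum>n\<in>W. phi x (Y n \<omega>))" by simp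
    moreover have "1 \<le> (\<Sum>n\<in>W. phi x (Y n \<omega>))" by (rule phi_sum[OF fin x a(3)])
    ultimately show ?thesis using True by simp
  next
    case False
    have "0 \<le> (\<Sum>n\<in>W. G n \<omega>)" unfolding G_def by (intro sum_nonneg prod_nonneg) (simp add: gnn)
    thus ?thesis using False by simp
  qed
  have "prob A = integral\<^sup>L M (indicator A)" using A_sets sets.sets_into_space by (simp add: Int_absorb2)
  also have "\<dots> \<le> integral\<^sup>L M (\<lambda>\<omega>. \<Sum>n\<in>W. G n \<omega>)"
    by (rule Bochner_Integration.integral_mono) (auto simp: A_sets Gint pw integrable_real_indicator emeasure_eq_measure)
  also have "\<dots> = (\<Sum>n\<in>W. integral\<^sup>L M (G n))" by (rule Bochner_Integration.integral_sum) (simp add: Gint)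
  also have "\<dots> = (\<Sum>n\<in>W. p * (E * q ^ card (J n)))" by (rule sum.cong) (simp_all add: GE)
  finally have "prob A * q \<le> (\<Sum>n\<in>W. p * (E * q ^ card (J n))) * q" using q01 by (simp add: mult_right_mono)
  also have "\<dots> = (\<Sum>n\<in>W. p * E * (q ^ Suc (card (J n))))" by (simp add: sum_distrib_left sum_distrib_right mult_ac)
  also have "\<dots> \<le> (\<Sum>n\<in>W. p * E * q ^ k)"
  proof (rule sum_mono)
    fix n assume "n \<in> W"
    have "k \<le> Suc (card (J n))" by (auto simp: J_def card_Diff_singleton_if)
    hence "q ^ Suc (card (J n)) \<le> q ^ k" by (rule power_decreasing) (use q01 in auto)
    thus "p * E * q ^ Suc (card (J n)) \<le> p * E * q ^ k" using p0 E0 by (simp add: mult_left_mono)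
  qed
  also have "\<dots> = real (card W) * (p * E * q ^ k)" by simp
  also have "\<dots> \<le> 2 * R * (p * E * q ^ k)"
    using Wset_card[OF R, of k] p0 E0 q01 by (simp add: W_def mult_right_mono)
  finally show ?thesis by (simp add: A_def W_def q_def p_def E_def mult_ac)
qed

lemma pq: "prob {\<omega>\<in>space M. l < s0 \<omega>} = 1 - prob {\<omega>\<in>space M. s0 \<omega> \<le> l}"
proof -
  have "{\<omega>\<in>space M. l < s0 \<omega>} = space M - {\<omega>\<in>space M. s0 \<omega> \<le> l}" by auto
  thus ?thesis by (simp add: prob_compl)
qed

lemma Z_null:
  assumes q: "prob {\<omega>\<in>space M. s0 \<omega> \<le> l} < 1"
  shows "prob {\<omega>\<in>space M. \<forall>i. Y i \<omega> \<le> l} = 0"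
proof -
  define q where "q = prob {\<omega>\<in>space M. s0 \<omega> \<le> l}"
  define B where "B m = {\<omega>\<in>space M. \<forall>i<m. Y i \<omega> \<le> l}" for m
  have Bs: "B m \<in> sets M" for m unfolding B_def by measurable
  have PB: "prob (B m) = q ^ m" for m
  proof -
    have "prob (B m) = integral\<^sup>L M (indicator (B m))" using Bs sets.sets_into_space by (simp add: Int_absorb2)
    also have "\<dots> = integral\<^sup>L M (\<lambda>\<omega>. \<Prod>i\<in>{..<m}. indicator {..l} (Y i \<omega>))"
      by (rule Bochner_Integration.integral_cong) (auto simp: B_def indicator_def prod_zero_iff) 
    also have "\<dots> = (\<Prod>i\<in>{..<m}. integral\<^sup>L M (\<lambda>\<omega>. indicator {..l} (s0 \<omega>)))"
      by (rule prod_indep(1)) (auto simp: indicator_def)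
    also have "\<dots> = q ^ m" by (simp add: int_ind q_def)
    finally show ?thesis .
  qed
  have le: "prob {\<omega>\<in>space M. \<forall>i. Y i \<omega> \<le> l} \<le> q ^ m" for m
    unfolding PB[symmetric] by (rule finite_measure_mono[OF _ Bs]) (auto simp: B_def)
  have "(\<lambda>m. q ^ m) \<longlonglongrightarrow> 0" using q by (intro LIMSEQ_power_zero) (simp add: q_def)
  hence "prob {\<omega>\<in>space M. \<forall>i. Y i \<omega> \<le> l} \<le> 0" by (rule LIMSEQ_le_const) (use le in auto)
  thus ?thesis by (simp add: measure_le_0_iff)
qed

lemma bad_bound:
  assumes x: "x > 0" and R: "L l / hh \<ge> 0"
    and q0: "0 < prob {\<omega>\<in>space M. s0 \<omega> \<le> l}" and q1: "prob {\<omega>\<in>space M. s0 \<omega> \<le> l} < 1"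
  shows "{\<omega>\<in>space M. sbar L Y hh l \<omega> < x} \<in> sets M"
    and "prob {\<omega>\<in>space M. \<not> sbar L Y hh l \<omega> < x}
          \<le> 2 * (L l / hh) * expectation (\<lambda>\<omega>. phi x (s0 \<omega>)) / prob {\<omega>\<in>space M. s0 \<omega> \<le> l}"
proof -
  note [measurable] = sbar_meas
  show "{\<omega>\<in>space M. sbar L Y hh l \<omega> < x} \<in> sets M" by measurable
  define R where "R = L l / hh"
  define q where "q = prob {\<omega>\<in>space M. s0 \<omega> \<le> l}"
  define p where "p = prob {\<omega>\<in>space M. l < s0 \<omega>}"
  define E where "E = expectation (\<lambda>\<omega>. phi x (s0 \<omega>))"
  define Z where "Z = {\<omega>\<in>space M. \<forall>i. Y i \<omega> \<le> l}"
  define C where "C k = {\<omega>\<in>space M. (\<forall>i<k. Y i \<omega> \<le> l) \<and> l < Y k \<omega> \<and> x \<le> (\<Sum>n\<in>Wset R k. Y n \<omega>)}" for k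
  define c where "c = 2 * R * E * p / q"
  have pq': "p = 1 - q" by (simp add: p_def q_def pq)
  have qq: "0 < q" "q < 1" using q0 q1 by (auto simp: q_def)
  have Zs: "Z \<in> sets M" unfolding Z_def by measurable
  have Cs: "C k \<in> sets M" for k unfolding C_def by measurable
  have PZ: "prob Z = 0" unfolding Z_def by (rule Z_null[OF q1])
  have PC: "prob (C k) \<le> c * q ^ k" for k
  proof -
    have "prob (C k) * q \<le> 2 * R * E * p * q ^ k"
      using C_bound[OF x R, of k l] by (simp add: C_def R_def E_def p_def q_def)
    hence "prob (C k) \<le> 2 * R * E * p * q ^ k / q" using qq by (simp add: field_simps)
    thus ?thesis by (simp add: c_def)
  qed
  have geo: "summable (\<lambda>k. c * q ^ k)" using qq by (intro summable_mult summable_geometric) simp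
  have summ: "summable (\<lambda>k. prob (C k))"
    by (rule summable_comparison_test'[OF geo]) (simp add: PC)
  have sub: "{\<omega>\<in>space M. \<not> sbar L Y hh l \<omega> < x} \<subseteq> Z \<union> (\<Union>k. C k)"
  proof
    fix \<omega> assume w: "\<omega> \<in> {\<omega>\<in>space M. \<not> sbar L Y hh l \<omega> < x}"
    show "\<omega> \<in> Z \<union> (\<Union>k. C k)"
    proof (cases "\<omega> \<in> Z")
      case False
      then obtain j where "l < Y j \<omega>" using w by (auto simp: Z_def not_le)
      define k where "k = (LEAST j. l < Y j \<omega>)"
      have k1: "l < Y k \<omega>" unfolding k_def by (rule LeastI) fact
      have k2: "\<forall>i<k. Y i \<omega> \<le> l" unfolding k_def using not_less_Least not_le by blast
      have "first_exceed Y l \<omega> = k" by (rule fe_least[of l Y k \<omega>, OF k1 k2])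
      hence "sbar L Y hh l \<omega> = (\<Sum>n\<in>Wset R k. Y n \<omega>)" by (simp add: sbar_eq R_def)
      hence "\<omega> \<in> C k" using w k1 k2 by (auto simp: C_def)
      thus ?thesis by blast
    qed simp
  qed
  have "prob {\<omega>\<in>space M. \<not> sbar L Y hh l \<omega> < x} \<le> prob (Z \<union> (\<Union>k. C k))"
    by (rule finite_measure_mono[OF sub]) (use Zs Cs in auto)
  also have "\<dots> \<le> prob Z + prob (\<Union>k. C k)" by (rule measure_Un_le) (use Zs Cs in auto)
  also have "prob (\<Union>k. C k) \<le> (\<Sum>k. prob (C k))"
    by (rule finite_measure_subadditive_countably) (use Cs summ in auto)
  also have "\<dots> \<le> (\<Sum>k. c * q ^ k)" by (rule suminf_le[OF PC summ geo])
  also have "\<dots> = c * (1 / (1 - q))" using qq by (simp add: suminf_mult suminf_geometric)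
  also have "\<dots> = 2 * R * E / q" using qq by (simp add: c_def pq' field_simps)
  finally show "prob {\<omega>\<in>space M. \<not> sbar L Y hh l \<omega> < x}
          \<le> 2 * (L l / hh) * expectation (\<lambda>\<omega>. phi x (s0 \<omega>)) / prob {\<omega>\<in>space M. s0 \<omega> \<le> l}"
    using PZ by (simp add: R_def E_def q_def)
qed

end


lemma final_alg:
  fixes Tl Tx h l x y0 e q bad :: real
  assumes h: "h \<ge> 2" and hl: "h^2 \<le> 1/Tl" and Tl: "Tl > 0" and Tx: "Tx > 0"
    and hyp: "1/Tx > (1/Tl) * (1 - 1/h)" and l: "l > 0" and x: "x = l / h^3"
    and q: "q = 1 - Tl" and e: "e \<le> 4 * Tx + 2 * y0 / x" and e0: "e \<ge> 0" and y0: "y0 > 0"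
    and bad: "bad \<le> 2 * (1/Tl / h) * e / q"
  shows "bad \<le> 22 / h + 6 * y0 * (1 / (Tl^2 * l))"
proof -
  have h0: "h > 0" using h by simp
  have "h * h \<ge> 2 * 2" using h by (intro mult_mono) auto
  hence "h^2 \<ge> 4" by (simp add: power2_eq_square)
  hence "4 \<le> 1/Tl" using hl by linarith
  hence Tl4: "Tl \<le> 1/4" using Tl by (simp add: field_simps)
  hence q34: "q \<ge> 3/4" using q by simp
  have "1 - 1/h \<ge> 1/2" using h by (simp add: field_simps)
  hence "(1/Tl) * (1/2) \<le> (1/Tl) * (1 - 1/h)" using Tl by (intro mult_left_mono) auto
  hence "1/(2*Tl) < 1/Tx" using hyp by simp
  hence TxTl: "Tx < 2 * Tl" using Tx Tl by (simp add: field_simps)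
  have x0: "x > 0" using x l h0 by simp
  define R where "R = 1/Tl/h"
  have R0: "R \<ge> 0" using Tl h0 by (simp add: R_def)
  have s1: "bad \<le> 2 * R * e / q" using bad by (simp add: R_def)
  have s2: "2 * R * e / q \<le> 2 * R * e / (3/4)" using q34 R0 e0
    by (intro divide_left_mono) (auto intro!: mult_nonneg_nonneg)
  have s3: "R * e \<le> R * (4 * Tx + 2 * y0 / x)" using e R0 by (rule mult_left_mono)
  have s4: "R * (4 * Tx + 2 * y0 / x) = 4 * (R * Tx) + 2 * y0 * (R / x)" by (simp add: field_simps)
  have s5: "R * Tx \<le> 2 / h" using TxTl Tl h0 by (simp add: R_def field_simps)
  have s6: "R / x = h^2 * (1/Tl) / l" unfolding x R_def using h0 l Tl by (simp add: field_simps power2_eq_square power3_eq_cube)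
  have s7: "h^2 * (1/Tl) / l \<le> (1/Tl) * (1/Tl) / l" using hl Tl l by (intro divide_right_mono mult_right_mono) auto
  have s8: "(1/Tl) * (1/Tl) / l = 1 / (Tl^2 * l)" by (simp add: power2_eq_square)
  define V where "V = 1 / (Tl^2 * l)"
  have "R / x \<le> V" unfolding V_def s8[symmetric] s6 by (rule s7)
  hence "2 * y0 * (R / x) \<le> 2 * y0 * V" using y0 by (intro mult_left_mono) auto
  hence "R * e \<le> 8 / h + 2 * y0 * V" using s3 s4 s5 by linarith
  hence "bad \<le> (8/3) * (8 / h + 2 * y0 * V)" using s1 s2 by simp
  also have "\<dots> \<le> 22 / h + 6 * y0 * V" using h0 y0 Tl l by (simp add: V_def field_simps)
  finally show ?thesis by (simp add: V_def)
qed

lemma TxTl_aux: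
  fixes Tl Tx h :: real
  assumes h: "h \<ge> 2" and Tl: "Tl > 0" and Tx: "Tx > 0" and hyp: "1/Tx > (1/Tl) * (1 - 1/h)"
  shows "Tx < 2 * Tl"
proof -
  have "1 - 1/h \<ge> 1/2" using h by (simp add: field_simps)
  hence "(1/Tl) * (1/2) \<le> (1/Tl) * (1 - 1/h)" using Tl by (intro mult_left_mono) auto
  hence "1/(2*Tl) < 1/Tx" using hyp by simp
  thus "Tx < 2 * Tl" using Tx Tl by (simp add: field_simps)
qed

theorem proposition3p8:
  fixes M :: "'a measure" and \<sigma>0 :: "'a \<Rightarrow> real" and Y :: "nat \<Rightarrow> 'a \<Rightarrow> real"
    and h :: "real \<Rightarrow> real"
  assumes "prob_space M"
    and "\<sigma>0 \<in> borel_measurable M"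
    and "AE \<omega> in M. \<sigma>0 \<omega> > 0"
    and "\<forall>v>0. ((\<lambda>u. tailL M \<sigma>0 (u * v) / tailL M \<sigma>0 u) \<longlongrightarrow> 1) at_top"
    and "\<And>n. Y n \<in> borel_measurable M"
    and "prob_space.indep_vars M (\<lambda>_. borel) Y UNIV"
    and "\<And>n. distr M borel (Y n) = distr M borel \<sigma>0"
    and "filterlim h at_top at_top"
    and "(\<lambda>t. (h t)\<^sup>2) \<in> o(\<lambda>t. rt (tailL M \<sigma>0) t)"
    and "\<forall>\<^sub>F t in at_top.
           tailL M \<sigma>0 (ellt (tailL M \<sigma>0) t / (h t)^3)
             > tailL M \<sigma>0 (ellt (tailL M \<sigma>0) t) * (1 - 1 / h t) \<and>
           tailL M \<sigma>0 (ellt (tailL M \<sigma>0) t * (h t)^3)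
             < tailL M \<sigma>0 (ellt (tailL M \<sigma>0) t) * (1 + 1 / h t)"
  shows "((\<lambda>t. measure M {\<omega> \<in> space M.
             sbar (tailL M \<sigma>0) Y (h t) (ellt (tailL M \<sigma>0) t) \<omega>
               < ellt (tailL M \<sigma>0) t / (h t)^3}) \<longlongrightarrow> 1) at_top"
proof -
  have iidM: "iid M \<sigma>0 Y" unfolding iid_def iid_axioms_def using assms by auto
  interpret iid M \<sigma>0 Y by (rule iidM)
  define T where "T y = prob {\<omega>\<in>space M. y < \<sigma>0 \<omega>}" for y
  have Lf: "tailL M \<sigma>0 = (\<lambda>y. 1 / T y)" by (auto simp: tailL_def T_def fun_eq_iff)
  have Ts: "{\<omega>\<in>space M. y < \<sigma>0 \<omega>} \<in> sets M" for y by measurable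
  have anti: "T b \<le> T a" if "a \<le> b" for a b
    unfolding T_def using that by (intro finite_measure_mono[OF _ Ts]) auto
  have T0: "T y \<ge> 0" for y by (simp add: T_def)
  have slow2: "((\<lambda>u. tailL M \<sigma>0 (u * 2) / tailL M \<sigma>0 u) \<longlongrightarrow> 1) at_top"
    using assms(4) by simp
  have Tpos: "T y > 0" for y
  proof (rule ccontr)
    assume "\<not> T y > 0"
    hence Ty: "T y = 0" using T0[of y] by simp
    have ev0: "eventually (\<lambda>u. tailL M \<sigma>0 (u * 2) / tailL M \<sigma>0 u = 0) at_top"
      using eventually_ge_at_top[of y]
    proof eventually_elim
      case (elim u)
      have "T u = 0" using anti[OF elim] T0[of u] Ty by simp
      thus ?case by (simp add: Lf)
    qed
    have "((\<lambda>u::real. 0::real) \<longlongrightarrow> 1) at_top" using slow2 tendsto_cong[OF ev0] by simp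
    thus False by (simp add: tendsto_const_iff)
  qed
  obtain y0 where y0: "y0 > 0" and dbl: "\<And>z. z \<ge> y0 \<Longrightarrow> T z \<le> 5/4 * T (2*z)"
  proof -
    have "eventually (\<lambda>u. tailL M \<sigma>0 (u * 2) / tailL M \<sigma>0 u < 5/4) at_top"
      by (rule order_tendstoD(2)[OF slow2]) simp
    then obtain N where N: "\<And>u. u \<ge> N \<Longrightarrow> tailL M \<sigma>0 (u * 2) / tailL M \<sigma>0 u < 5/4"
      by (auto simp: eventually_at_top_linorder)
    show ?thesis
    proof (rule that[of "max N 1"])
      fix z assume "z \<ge> max N 1"
      hence "(1 / T (z*2)) / (1 / T z) < 5/4" using N[of z] by (simp add: Lf)
      hence "T z / T (2*z) < 5/4" by (simp add: mult.commute)
      thus "T z \<le> 5/4 * T (2*z)" using Tpos[of "2*z"] by (simp add: field_simps)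
    qed simp
  qed
  define e where "e x = expectation (\<lambda>\<omega>. phi x (\<sigma>0 \<omega>))" for x
  have phint: "integrable M (\<lambda>\<omega>. phi x (\<sigma>0 \<omega>))" for x
    by (intro integrable_const_bound[where B=1]) (auto simp: phi_bounds abs_le_iff)
  have e0: "e x \<ge> 0" for x unfolding e_def by (rule Bochner_Integration.integral_nonneg) (simp add: phi_bounds)
  have e1: "e x \<le> 1" if "x > 0" for x
  proof -
    have "e x \<le> expectation (\<lambda>\<omega>. 1)" unfolding e_def
      by (rule Bochner_Integration.integral_mono) (auto simp: phint phi_bounds)
    thus ?thesis by (simp add: prob_space)
  qed
  have erec: "e x \<le> T (x/2) + e (x/2) / 2" if "x > 0" for x
  proof -
    have "e x \<le> expectation (\<lambda>\<omega>. indicator {x/2<..} (\<sigma>0 \<omega>) + phi (x/2) (\<sigma>0 \<omega>) / 2)" unfolding e_def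
      by (rule Bochner_Integration.integral_mono) (auto simp: phint phi_rec[OF that] integrable_const_bound[where B=1] abs_le_iff)
    also have "\<dots> = expectation (\<lambda>\<omega>. indicator {x/2<..} (\<sigma>0 \<omega>)) + e (x/2) / 2"
      unfolding e_def by (subst Bochner_Integration.integral_add) (auto simp: phint integrable_const_bound[where B=1])
    also have "expectation (\<lambda>\<omega>. indicator {x/2<..} (\<sigma>0 \<omega>)) = T (x/2)"
      by (simp add: int_ind T_def)
    finally show ?thesis .
  qed
  have eb: "e x \<le> 4 * T x + 2 * y0 / x" if "x \<ge> y0" for x
  proof -
    obtain m where "x / y0 < 2^m" using real_arch_pow[of 2 "x/y0"] by auto
    hence "x \<le> 2^m * y0" using y0 by (simp add: field_simps)
    thus ?thesis using ebound[of y0 T e, OF y0 Tpos dbl e1 erec that] by simp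
  qed
  have vlim: "((\<lambda>y. 1 / (T y ^ 2 * y)) \<longlongrightarrow> 0) at_top"
    by (rule potter_tendsto[of y0 T, OF y0 Tpos anti dbl])
  define l where "l t = ellt (tailL M \<sigma>0) t" for t
  have ev_h: "eventually (\<lambda>t. c \<le> h t) at_top" for c using assms(8) by (simp add: filterlim_at_top)
  have ev_h2: "eventually (\<lambda>t. c \<le> h t ^ 2) at_top" for c
    using ev_h[of "max 1 c"]
  proof eventually_elim
    case (elim t)
    have "h t * 1 \<le> h t * h t" using elim by (intro mult_left_mono) auto
    hence "h t \<le> h t * h t" by (simp only: mult_1_right)
    thus ?case using elim unfolding power2_eq_square by linarith
  qed
  have ev_hl: "eventually (\<lambda>t. h t ^ 2 \<le> 1 / T (l t)) at_top"
    using landau_o.smallD[OF assms(9) zero_less_one]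
    by eventually_elim (simp add: rt_def Lf l_def abs_of_nonneg T0)
  have llim: "filterlim l at_top at_top"
    unfolding filterlim_at_top
  proof
    fix Z :: real
    show "eventually (\<lambda>t. Z \<le> l t) at_top"
      using ev_hl ev_h2[of "1 / T Z + 1"]
    proof eventually_elim
      case (elim t)
      hence "1 / T Z < 1 / T (l t)" by linarith
      hence "T (l t) < T Z" using Tpos[of Z] Tpos[of "l t"] by (simp add: field_simps)
      thus ?case using anti[of "l t" Z] by linarith
    qed
  qed
  define B where "B t = 22 / h t + 6 * y0 * (1 / (T (l t) ^ 2 * l t))" for t
  have Blim: "(B \<longlongrightarrow> 0) at_top"
  proof -
    have "((\<lambda>t. 22 / h t) \<longlongrightarrow> 0) at_top"
      by (rule tendsto_divide_0[OF tendsto_const filterlim_at_top_imp_at_infinity[OF assms(8)]])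
    moreover have "((\<lambda>t. 1 / (T (l t) ^ 2 * l t)) \<longlongrightarrow> 0) at_top"
      by (rule filterlim_compose[OF vlim llim])
    ultimately have "((\<lambda>t. 22 / h t + 6 * y0 * (1 / (T (l t) ^ 2 * l t))) \<longlongrightarrow> 0 + 6 * y0 * 0) at_top"
      by (intro tendsto_intros)
    moreover have "B = (\<lambda>t. 22 / h t + 6 * y0 * (1 / (T (l t) ^ 2 * l t)))" by (rule ext) (simp add: B_def)
    ultimately show ?thesis by simp
  qed
  let ?P = "\<lambda>t. measure M {\<omega> \<in> space M. sbar (tailL M \<sigma>0) Y (h t) (ellt (tailL M \<sigma>0) t) \<omega> < ellt (tailL M \<sigma>0) t / (h t)^3}"
  have low: "eventually (\<lambda>t. 1 - B t \<le> ?P t) at_top"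
    using ev_h[of 2] ev_hl ev_h2[of "2 / T y0 + 1"] assms(10) eventually_gt_at_top[of 0] llim[unfolded filterlim_at_top, rule_format, of 1]
  proof eventually_elim
    case (elim t)
    define x where "x = l t / h t ^ 3"
    have h2: "h t \<ge> 2" and hl: "h t ^ 2 \<le> 1 / T (l t)" using elim by auto
    have hyp: "1 / T x > (1 / T (l t)) * (1 - 1 / h t)" using elim(4) by (simp add: Lf l_def x_def)
    have TxTl: "T x < 2 * T (l t)" by (rule TxTl_aux[OF h2 Tpos Tpos hyp])
    have "T (l t) \<le> 1 / h t ^ 2" using hl Tpos[of "l t"] h2 by (simp add: field_simps)
    also have "\<dots> \<le> 1 / (2 / T y0 + 1)"
    proof -
      have p1: "0 < 2 / T y0 + 1" using Tpos[of y0] by (simp add: add_pos_pos)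
      have "0 < (h t)^2 * (2/T y0 + 1)" using p1 elim(3) by (intro mult_pos_pos) auto
      thus ?thesis using elim(3) by (intro divide_left_mono) auto
    qed
    finally have "2 * T (l t) \<le> 2 / (2 / T y0 + 1)" by simp
    also have "\<dots> < T y0" using Tpos[of y0] by (simp add: field_simps)
    finally have "T x < T y0" using TxTl by simp
    hence xy0: "x > y0" using anti[of x y0] by linarith
    have hpos: "h t > 0" using h2 by simp
    have "0 < x * h t ^ 3" using xy0 y0 hpos by simp
    hence lpos: "l t > 0" using hpos by (simp add: x_def)
    have x0: "x > 0" using xy0 y0 by simp
    have Tl4: "T (l t) \<le> 1/4"
    proof -
      have "h t * h t \<ge> 2 * 2" using h2 by (intro mult_mono) auto
      hence "4 \<le> 1 / T (l t)" using hl by (simp add: power2_eq_square)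
      thus ?thesis using Tpos[of "l t"] by (simp add: field_simps)
    qed
    define q where "q = prob {\<omega>\<in>space M. \<sigma>0 \<omega> \<le> l t}"
    have q: "q = 1 - T (l t)" by (simp add: q_def T_def pq)
    have q0: "0 < q" "q < 1" using q Tl4 Tpos[of "l t"] by auto
    have R0: "tailL M \<sigma>0 (l t) / h t \<ge> 0" using Tpos[of "l t"] hpos by (simp add: Lf)
    note bb = bad_bound[of x "tailL M \<sigma>0" "l t" "h t", OF x0 R0 q0[unfolded q_def]]
    have compl: "{\<omega>\<in>space M. \<not> sbar (tailL M \<sigma>0) Y (h t) (l t) \<omega> < x} = space M - {\<omega>\<in>space M. sbar (tailL M \<sigma>0) Y (h t) (l t) \<omega> < x}"
      by auto
    have P: "prob {\<omega>\<in>space M. sbar (tailL M \<sigma>0) Y (h t) (l t) \<omega> < x} = 1 - prob {\<omega>\<in>space M. \<not> sbar (tailL M \<sigma>0) Y (h t) (l t) \<omega> < x}"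
      unfolding compl by (simp add: prob_compl[OF bb(1)])
    have "prob {\<omega>\<in>space M. \<not> sbar (tailL M \<sigma>0) Y (h t) (l t) \<omega> < x} \<le> B t"
      unfolding B_def
    proof (rule final_alg[OF h2 hl Tpos Tpos hyp lpos x_def q eb[OF less_imp_le[OF xy0]] e0 y0])
      show "prob {\<omega>\<in>space M. \<not> sbar (tailL M \<sigma>0) Y (h t) (l t) \<omega> < x} \<le> 2 * (1 / T (l t) / h t) * e x / q"
        using bb(2) by (simp add: Lf e_def q_def)
    qed
    thus ?case using P by (simp add: l_def x_def)
  qed
  have up: "eventually (\<lambda>t. ?P t \<le> 1) at_top" by simp
  have "((\<lambda>t. 1 - B t) \<longlongrightarrow> 1 - 0) at_top" by (intro tendsto_intros Blim)
  hence "((\<lambda>t. 1 - B t) \<longlongrightarrow> 1) at_top" by simp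
  from tendsto_sandwich[OF low up this tendsto_const] show ?thesis .
qed


end
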